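(* Let $(\mathbf x,\mathbf p,\mu)$ be a deterministic TFM satisfying weak UIC and $2$-weak-SCP, and let $\mathbf b$ be a bid vector under which at least one user is confirmed. Then every unconfirmed user $i$ (i.e. $x_i(\mathbf b)=0$) satisfies $b_i\le p(\mathbf b)$.
   Context: Setting (TFM). Each user $i$ has a true value $v_i\ge0$ and submits a single bid $b_i\ge0$; $\mathbf b=(b_1,\dots,b_m)$, $\mathbf b_{-i}$ the other bids. A TFM has an inclusion rule (run by the miner, choosing at most $B$ bids) and confirmation, payment, miner-revenue rules (run by the blockchain on included bids); the mechanism treats users symmetrically. Composing the honest inclusion rule with the others gives deterministic $(\mathbf x,\mathbf p,\mu)$: $x_i(\mathbf b)\in\{0,1\}$ indicates confirmation, $p_i(\mathbf b)\le b_i$ the payment ($0$ if unconfirmed), $\mu(\mathbf b)$ the miner revenue. Strategic players (a user, the miner, or the miner with some users) may bid untruthfully after seeing all bids, inject fake bids (true value $0$), and (if the miner is involved) include any at most $B$ available bids. Weak ($1$-strict) utility: miner revenue (if the miner is in the player) plus $v-p$ for each confirmed transaction of the player (true value $v$, payment $p$), minus $(b-v)$ for each unconfirmed transaction of the player with bid $b>v$. Weak UIC: with an honest miner, each user's weak utility is maximized by truthful bidding without fake bids, whatever the other bids. $c$-weak-SCP: for every coalition of the miner with between $1$ and $c$ users, joint weak utility is maximized by truthful bidding and honest miner behavior, whatever the other bids. Universal payment: for mechanisms satisfying weak UIC and $2$-weak-SCP, all users confirmed under $\mathbf b$ pay the same amount; $p(\mathbf b)$ denotes this common payment, and $p(\mathbf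 b)=0$ if no user is confirmed under $\mathbf b$. *)

theory Defs
  imports Complex_Main "HOL-Combinatorics.Permutations"
begin

text \<open>
  Bid vectors are lists of reals; users are identified with positions in the list.
  A (deterministic) TFM consists of a block size B, an honest inclusion rule
  (returning the set of positions of the bids the honest miner includes) and the
  blockchain's confirmation, payment and miner-revenue rules, which only see the
  block, i.e. the list of included bids (in increasing position order).
\<close>

record tfm =
  blk_size :: nat
  incl :: "real list \<Rightarrow> nat set"
  conf :: "real list \<Rightarrow> nat \<Rightarrow> bool"
  pay  :: "real list \<Rightarrow> nat \<Rightarrow> real"
  mrev :: "real list \<Rightarrow> real"

definition nonneg_bids :: "real list \<Rightarrow> bool" where
  "nonneg_bids bs \<longleftrightarrow> (\<forall>x\<in>set bs. 0 \<le> x)"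

definition block :: "real list \<Rightarrow> nat set \<Rightarrow> real list" where
  "block b S = nths b S"

text \<open>Position of bid k of b inside the block formed by S.\<close>
definition rank :: "nat set \<Rightarrow> nat \<Rightarrow> nat" where
  "rank S k = card {j\<in>S. j < k}"

definition confirmed_in :: "tfm \<Rightarrow> real list \<Rightarrow> nat set \<Rightarrow> nat \<Rightarrow> bool" where
  "confirmed_in M b S k \<longleftrightarrow> k < length b \<and> k \<in> S \<and> conf M (block b S) (rank S k)"

definition payment_in :: "tfm \<Rightarrow> real list \<Rightarrow> nat set \<Rightarrow> nat \<Rightarrow> real" where
  "payment_in M b S k = (if confirmed_in M b S k then pay M (block b S) (rank S k) else 0)"

definition revenue_in :: "tfm \<Rightarrow> real list \<Rightarrow> nat set \<Rightarrow> real" where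
  "revenue_in M b S = mrev M (block b S)"

definition xconf :: "tfm \<Rightarrow> real list \<Rightarrow> nat \<Rightarrow> bool" where
  "xconf M b i = confirmed_in M b (incl M b) i"

definition pmt :: "tfm \<Rightarrow> real list \<Rightarrow> nat \<Rightarrow> real" where
  "pmt M b i = payment_in M b (incl M b) i"

definition mu :: "tfm \<Rightarrow> real list \<Rightarrow> real" where
  "mu M b = revenue_in M b (incl M b)"

text \<open>Weak (1-strict) utility of one transaction at position k of b with true value v,
  when the bids at positions S are included.\<close>
definition tx_util :: "tfm \<Rightarrow> real list \<Rightarrow> nat set \<Rightarrow> nat \<Rightarrow> real \<Rightarrow> real" where
  "tx_util M b S k v =
     (if confirmed_in M b S k then v - payment_in M b S k
      else if b ! k > v then - (b ! k - v) else 0)"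

text \<open>Total weak utility of the fake bids (true value 0) placed at positions
  n, ..., length b - 1 of b.\<close>
definition fake_util :: "tfm \<Rightarrow> real list \<Rightarrow> nat set \<Rightarrow> nat \<Rightarrow> real" where
  "fake_util M b S n = (\<Sum>k\<in>{n..<length b}. tx_util M b S k 0)"

definition valid_tfm :: "tfm \<Rightarrow> bool" where
  "valid_tfm M \<longleftrightarrow>
     (\<forall>b. nonneg_bids b \<longrightarrow> incl M b \<subseteq> {..<length b} \<and> card (incl M b) \<le> blk_size M) \<and>
     (\<forall>b i. nonneg_bids b \<longrightarrow> i < length b \<longrightarrow> pmt M b i \<le> b ! i) \<and>
     (\<forall>b \<pi>. nonneg_bids b \<longrightarrow> \<pi> permutes {..<length b} \<longrightarrow>
         incl M (permute_list \<pi> b) = {k. k < length b \<and> \<pi> k \<in> incl M b}) \<and>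
     (\<forall>bl \<pi>. nonneg_bids bl \<longrightarrow> \<pi> permutes {..<length bl} \<longrightarrow>
         (\<forall>k<length bl. conf M (permute_list \<pi> bl) k = conf M bl (\<pi> k)
                      \<and> pay M (permute_list \<pi> bl) k = pay M bl (\<pi> k)) \<and>
         mrev M (permute_list \<pi> bl) = mrev M bl)"

text \<open>Weak UIC: honest miner; user i with true value b ! i cannot gain by replacing
  the truthful bid by r and injecting fake bids fs (appended at the end).\<close>
definition weak_UIC :: "tfm \<Rightarrow> bool" where
  "weak_UIC M \<longleftrightarrow>
     (\<forall>b i r fs. nonneg_bids b \<longrightarrow> i < length b \<longrightarrow> 0 \<le> r \<longrightarrow> nonneg_bids fs \<longrightarrow>
        (let b' = b[i := r] @ fs in
           tx_util M b' (incl M b') i (b ! i) + fake_util M b' (incl M b') (length b)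
             \<le> tx_util M b (incl M b) i (b ! i)))"

text \<open>c-weak-SCP: for every coalition of the miner with a set C of between 1 and c
  users (true values = their truthful bids), joint weak utility is maximised by truthful
  bidding and honest inclusion, whatever the other bids. A deviation replaces the bids of
  the coalition users by r, appends fake bids fs, and includes any set S of at most B of
  the available bids.\<close>
definition weak_SCP :: "nat \<Rightarrow> tfm \<Rightarrow> bool" where
  "weak_SCP c M \<longleftrightarrow>
     (\<forall>b C r fs S. nonneg_bids b \<longrightarrow> C \<subseteq> {..<length b} \<longrightarrow> 1 \<le> card C \<longrightarrow> card C \<le> c \<longrightarrow>
        (\<forall>k\<in>C. 0 \<le> r k) \<longrightarrow> nonneg_bids fs \<longrightarrow>
        (let b' = map (\<lambda>k. if k \<in> C then r k else b ! k) [0..<length b] @ fs in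
           S \<subseteq> {..<length b'} \<longrightarrow> card S \<le> blk_size M \<longrightarrow>
           revenue_in M b' S + (\<Sum>k\<in>C. tx_util M b' S k (b ! k)) + fake_util M b' S (length b)
             \<le> mu M b + (\<Sum>k\<in>C. tx_util M b (incl M b) k (b ! k))))"

end

theory Submission
  imports Defs
begin

lemma rank_Suc: "rank S (Suc k) = (if 0 \<in> S then Suc (rank {j. Suc j \<in> S} k) else rank {j. Suc j \<in> S} k)"
proof -
  have e: "{j\<in>S. j < Suc k} = ({0} \<inter> S) \<union> Suc ` {j\<in>{j. Suc j \<in> S}. j < k}"
    by (auto simp: image_iff) (metis less_Suc_eq_0_disj less_Suc_eq)
  have f: "finite (Suc ` {j\<in>{j. Suc j \<in> S}. j < k})" by simp
  have "card {j\<in>S. j < Suc k} = card ({0} \<inter> S) + card (Suc ` {j\<in>{j. Suc j \<in> S}. j < k})"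
    unfolding e by (rule card_Un_disjoint) auto
  also have "card (Suc ` {j\<in>{j. Suc j \<in> S}. j < k}) = rank {j. Suc j \<in> S} k"
    unfolding rank_def by (simp add: card_image)
  finally show ?thesis unfolding rank_def by auto
qed

lemma nths_rank: "k < length xs \<Longrightarrow> k \<in> S \<Longrightarrow> rank S k < length (nths xs S) \<and> nths xs S ! rank S k = xs ! k"
proof (induction xs arbitrary: S k)
  case Nil then show ?case by simp
next
  case (Cons x xs)
  show ?case
  proof (cases k)
    case 0
    then show ?thesis using Cons.prems by (simp add: nths_Cons rank_def)
  next
    case (Suc k')
    have "k' < length xs" "k' \<in> {j. Suc j \<in> S}" using Cons.prems Suc by auto
    from Cons.IH[OF this] show ?thesis using Suc by (simp add: nths_Cons rank_Suc nth_append)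
  qed
qed


lemma sym_lemma:
  assumes v: "valid_tfm M" and nn: "nonneg_bids d" and i: "i < length d" and j: "j < length d"
    and eq: "d ! i = d ! j"
  shows "xconf M d i = xconf M d j \<and> pmt M d i = pmt M d j"
proof -
  let ?\<pi> = "Transposition.transpose i j"
  have perm: "?\<pi> permutes {..<length d}" using i j by (simp add: permutes_swap_id)
  have fx: "permute_list ?\<pi> d = d"
    by (rule nth_equalityI) (auto simp: permute_list_nth[OF perm] eq transpose_def)
  have V3: "\<forall>b \<pi>. nonneg_bids b \<longrightarrow> \<pi> permutes {..<length b} \<longrightarrow>
         incl M (permute_list \<pi> b) = {k. k < length b \<and> \<pi> k \<in> incl M b}"
    using v unfolding valid_tfm_def by blast
  have V4: "\<forall>bl \<pi>. nonneg_bids bl \<longrightarrow> \<pi> permutes {..<length bl} \<longrightarrow>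
         (\<forall>k<length bl. conf M (permute_list \<pi> bl) k = conf M bl (\<pi> k)
                      \<and> pay M (permute_list \<pi> bl) k = pay M bl (\<pi> k))"
    using v unfolding valid_tfm_def by blast
  have inc: "incl M d = {k. k < length d \<and> ?\<pi> k \<in> incl M d}"
    using V3[rule_format, OF nn perm] unfolding fx .
  have "x \<in> incl M d \<longleftrightarrow> x < length d \<and> ?\<pi> x \<in> incl M d" for x
    by (subst (1) inc) simp
  from this[of i] have ij: "i \<in> incl M d \<longleftrightarrow> j \<in> incl M d" using i by simp
  show ?thesis
  proof (cases "i \<in> incl M d")
    case False
    then show ?thesis using ij
      by (simp add: xconf_def pmt_def payment_in_def confirmed_in_def)
  next
    case True
    with ij have jS: "j \<in> incl M d" by simp
    define S where "S = incl M d"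
    define bl where "bl = nths d S"
    have ri: "rank S i < length bl" "bl ! rank S i = d ! i"
      using nths_rank[OF i, of S] True unfolding S_def bl_def by auto
    have rj: "rank S j < length bl" "bl ! rank S j = d ! j"
      using nths_rank[OF j, of S] jS unfolding S_def bl_def by auto
    let ?\<sigma> = "Transposition.transpose (rank S i) (rank S j)"
    have perm2: "?\<sigma> permutes {..<length bl}" using ri rj by (simp add: permutes_swap_id)
    have fx2: "permute_list ?\<sigma> bl = bl"
    proof (rule nth_equalityI)
      show "length (permute_list ?\<sigma> bl) = length bl" by simp
      have e2: "bl ! rank S i = bl ! rank S j" using ri(2) rj(2) eq by simp
      fix k assume "k < length (permute_list ?\<sigma> bl)"
      hence "k < length bl" by simp
      then show "permute_list ?\<sigma> bl ! k = bl ! k"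
        using e2 by (simp add: permute_list_nth[OF perm2] transpose_def)
    qed
    have nnb: "nonneg_bids bl"
      unfolding bl_def using nn set_nths_subset[of d S] unfolding nonneg_bids_def by (meson subsetD)
    have c: "\<forall>k<length bl. conf M (permute_list ?\<sigma> bl) k = conf M bl (?\<sigma> k)
                      \<and> pay M (permute_list ?\<sigma> bl) k = pay M bl (?\<sigma> k)"
      using V4[rule_format, OF nnb perm2] by blast
    have "conf M bl (rank S i) = conf M bl (rank S j) \<and> pay M bl (rank S i) = pay M bl (rank S j)"
      using c[rule_format, OF ri(1)] fx2 by simp
    then show ?thesis using True jS i j
      by (simp add: xconf_def pmt_def payment_in_def confirmed_in_def block_def S_def[symmetric] bl_def[symmetric])
  qed
qed

theorem mainTheorem16:
  fixes M :: tfm and b :: "real list"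
  assumes "valid_tfm M" and "weak_UIC M" and "weak_SCP 2 M"
    and "nonneg_bids b"
    and "\<exists>j<length b. xconf M b j"
  shows "\<forall>i<length b. \<not> xconf M b i \<longrightarrow>
           (\<forall>j<length b. xconf M b j \<longrightarrow> b ! i \<le> pmt M b j)"
proof (intro allI impI)
  fix i j
  assume i: "i < length b" and ni: "\<not> xconf M b i" and j: "j < length b" and xj: "xconf M b j"
  show "b ! i \<le> pmt M b j"
  proof (rule ccontr)
    assume "\<not> b ! i \<le> pmt M b j"
    hence lt: "pmt M b j < b ! i" by simp
    have ij: "i \<noteq> j" using ni xj by auto
    define p where "p = pmt M b j"
    define d where "d = b[j := b ! i]"
    have ld: "length d = length b" by (simp add: d_def)
    have sd: "set d \<subseteq> insert (b ! i) (set b)" unfolding d_def by (rule set_update_subset_insert)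
    have bin: "b ! i \<in> set b" using i by simp
    have nnd: "nonneg_bids d" using assms(4) sd bin unfolding nonneg_bids_def by blast
    have dj: "d ! j = b ! i" using j by (simp add: d_def)
    have di: "d ! i = b ! i" using ij by (simp add: d_def)
    have db: "d[j := b ! j] = b" by (simp add: d_def)
    have v: "valid_tfm M" by fact
    have utilbj: "tx_util M b (incl M b) j v = v - p" for v
      using xj by (simp add: tx_util_def xconf_def pmt_def p_def)
    have utilbi: "tx_util M b (incl M b) i (b ! i) = 0"
      using ni by (simp add: tx_util_def xconf_def)
    have f0: "fake_util M x S (length x) = 0" for x S by (simp add: fake_util_def)
    have U: "\<forall>b i r fs. nonneg_bids b \<longrightarrow> i < length b \<longrightarrow> 0 \<le> r \<longrightarrow> nonneg_bids fs \<longrightarrow>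
        (let b' = b[i := r] @ fs in
           tx_util M b' (incl M b') i (b ! i) + fake_util M b' (incl M b') (length b)
             \<le> tx_util M b (incl M b) i (b ! i))"
      using assms(2) unfolding weak_UIC_def .
    have bj0: "0 \<le> b ! j" using assms(4) j unfolding nonneg_bids_def by auto
    have "tx_util M b (incl M b) j (d ! j) + fake_util M b (incl M b) (length d)
             \<le> tx_util M d (incl M d) j (d ! j)"
      using U[rule_format, OF nnd _ bj0, of j "[]"] j ld db by (simp add: Let_def nonneg_bids_def)
    hence u1: "b ! i - p \<le> tx_util M d (incl M d) j (b ! i)"
      using utilbj dj ld f0[of b] by simp
    have xdj: "xconf M d j"
    proof (rule ccontr)
      assume "\<not> xconf M d j"
      hence "tx_util M d (incl M d) j (b ! i) = 0" using dj by (simp add: tx_util_def xconf_def)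
      thus False using u1 lt p_def by simp
    qed
    define q where "q = pmt M d j"
    have utildj: "tx_util M d (incl M d) j v = v - q" for v
      using xdj by (simp add: tx_util_def xconf_def pmt_def q_def)
    have deq: "d ! i = d ! j" using di dj by simp
    have il: "i < length d" and jl: "j < length d" using i j ld by simp_all
    have symm: "xconf M d i = xconf M d j \<and> pmt M d i = pmt M d j"
      by (rule sym_lemma[OF v nnd il jl deq])
    have xdi: "xconf M d i" and pdi: "pmt M d i = q" using symm xdj q_def by simp_all
    have utildi: "tx_util M d (incl M d) i v = v - q" for v
      using xdi pdi unfolding tx_util_def xconf_def pmt_def by simp
    have qp: "q \<le> p" using u1 utildj by simp
    have SCP: "\<forall>b C r fs S. nonneg_bids b \<longrightarrow> C \<subseteq> {..<length b} \<longrightarrow> 1 \<le> card C \<longrightarrow> card C \<le> 2 \<longrightarrow>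
        (\<forall>k\<in>C. 0 \<le> r k) \<longrightarrow> nonneg_bids fs \<longrightarrow>
        (let b' = map (\<lambda>k. if k \<in> C then r k else b ! k) [0..<length b] @ fs in
           S \<subseteq> {..<length b'} \<longrightarrow> card S \<le> blk_size M \<longrightarrow>
           revenue_in M b' S + (\<Sum>k\<in>C. tx_util M b' S k (b ! k)) + fake_util M b' S (length b)
             \<le> mu M b + (\<Sum>k\<in>C. tx_util M b (incl M b) k (b ! k)))"
      using assms(3) unfolding weak_SCP_def .
    have inclb: "incl M b \<subseteq> {..<length b}" "card (incl M b) \<le> blk_size M"
      using v assms(4) unfolding valid_tfm_def by auto
    have incld: "incl M d \<subseteq> {..<length d}" "card (incl M d) \<le> blk_size M"
      using v nnd unfolding valid_tfm_def by auto
    have m1: "map (\<lambda>k. if k \<in> {j} then b ! j else d ! k) [0..<length d] = b"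
      by (rule nth_equalityI) (auto simp: ld d_def)
    have "revenue_in M b (incl M b) + tx_util M b (incl M b) j (d ! j) + fake_util M b (incl M b) (length d)
             \<le> mu M d + tx_util M d (incl M d) j (d ! j)"
      using SCP[rule_format, OF nnd, of "{j}" "\<lambda>_. b ! j" "[]" "incl M b"] j ld inclb bj0 m1
      by (simp add: Let_def nonneg_bids_def)
    hence s1: "mu M b + (b ! i - p) \<le> mu M d + (b ! i - q)"
      using utilbj utildj dj ld f0[of b] by (simp add: mu_def)
    have bi0: "0 \<le> b ! i" using assms(4) i unfolding nonneg_bids_def by auto
    have m2: "map (\<lambda>k. if k \<in> {i, j} then b ! i else b ! k) [0..<length b] = d"
      by (rule nth_equalityI) (use j in \<open>auto simp: ld d_def nth_list_update\<close>)
    have "revenue_in M d (incl M d) + (\<Sum>k\<in>{i,j}. tx_util M d (incl M d) k (b ! k)) + fake_util M d (incl M d) (length b)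
             \<le> mu M b + (\<Sum>k\<in>{i,j}. tx_util M b (incl M b) k (b ! k))"
      using SCP[rule_format, OF assms(4), of "{i,j}" "\<lambda>_. b ! i" "[]" "incl M d"] i j ij ld incld bi0 m2
      by (simp add: Let_def nonneg_bids_def)
    hence s2: "mu M d + (b ! i - q) + (b ! j - q) \<le> mu M b + 0 + (b ! j - p)"
      using utildi utildj utilbi utilbj ij ld f0[of d] by (simp add: mu_def)
    from s1 s2 qp lt p_def show False by linarith
  qed
qed

end
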